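(* Under the hypotheses of Theorem 2.3 (a commuting pair of strict contractions $T_1,T_2$ on a Banach space $\mathbb X$ with each $A_{T_i}$ a norm, $\mathbb X_i=(\mathbb X,A_{T_i})$, and a unitary $S$ on $\mathbb X_1\oplus_2\mathbb X_2$ with $S(T_2x,x)=(x,T_1x)$ for all $x\in\mathbb X$), the operators on $\widetilde{\mathbb X}=\mathbb X\oplus_2\ell_2(\mathbb X_1\oplus_2\mathbb X_2)$ given by $$V_1(x,(x_1,x_2),(x_3,x_4),\dots)=(T_1x,\ S(x,x_2),\ S(x_1,x_4),\ S(x_3,x_6),\dots),$$ $$V_2(x,(x_1,x_2),(x_3,x_4),\dots)=(T_2x,\ (x_1',x),\ (x_3',x_2'),\ (x_5',x_4'),\dots),$$ where $(x_{2n-1}',x_{2n}')=S^{-1}(x_{2n-1},x_{2n})$ for $n\ge1$, are commuting linear isometries, satisfy $P_{\mathbb X}V_1^{s_1}V_2^{s_2}x=T_1^{s_1}T_2^{s_2}x$ for all $x\in\mathbb X$, $s_1,s_2\ge0$, and $\widetilde{\mathbb X}$ is the closed linear span of $\{V_1^{s_1}V_2^{s_2}x: x\in\mathbb X,\ s_1,s_2\ge0\}$.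
   Context: $A_T(x)=(\|x\|^2-\|Tx\|^2)^{1/2}$; $(\mathbb X,A_T)$ is $\mathbb X$ with norm $A_T$. $\oplus_2$ is the direct $2$-sum with norm $(\|x_1\|^2+\|x_2\|^2)^{1/2}$; $\ell_2(\mathbb Y)$ is square-summable sequences with the $\ell_2$ norm. Elements of $\widetilde{\mathbb X}$ are written $(x,(x_1,x_2),(x_3,x_4),\dots)$ with $x\in\mathbb X$, $x_{2n-1}\in\mathbb X_1$, $x_{2n}\in\mathbb X_2$; $\mathbb X$ is identified with $\{(x,\mathbf 0,\dots)\}$ and $P_{\mathbb X}$ is the coordinate projection onto the first entry. A unitary is a surjective linear isometry. *)

theory Defs
  imports "HOL-Analysis.Analysis"
begin

definition A_T :: "('a::real_normed_vector \<Rightarrow> 'a) \<Rightarrow> 'a \<Rightarrow> real" where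
  "A_T T x = sqrt ((norm x)\<^sup>2 - (norm (T x))\<^sup>2)"

definition is_norm :: "('a::real_vector \<Rightarrow> real) \<Rightarrow> bool" where
  "is_norm N \<longleftrightarrow> (\<forall>x. 0 \<le> N x) \<and> (\<forall>x. N x = 0 \<longleftrightarrow> x = 0)
     \<and> (\<forall>c x. N (c *\<^sub>R x) = \<bar>c\<bar> * N x) \<and> (\<forall>x y. N (x + y) \<le> N x + N y)"

definition strict_contraction :: "('a::real_normed_vector \<Rightarrow> 'a) \<Rightarrow> bool" where
  "strict_contraction T \<longleftrightarrow> bounded_linear T \<and> onorm T < 1"

definition sum2_norm :: "('a::real_normed_vector \<Rightarrow> 'a) \<Rightarrow> ('a \<Rightarrow> 'a) \<Rightarrow> 'a \<times> 'a \<Rightarrow> real" where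
  "sum2_norm T1 T2 p = sqrt ((A_T T1 (fst p))\<^sup>2 + (A_T T2 (snd p))\<^sup>2)"

text \<open>Elements of X~ = X \<oplus>_2 l_2(X_1 \<oplus>_2 X_2) are represented as pairs (x, f) where
  f n = (x_{2n+1}, x_{2n+2}) for n = 0, 1, 2, ...; the carrier consists of those pairs
  with square-summable sequence part.\<close>
type_synonym 'a tl = "'a \<times> (nat \<Rightarrow> 'a \<times> 'a)"

definition Xt :: "('a::real_normed_vector \<Rightarrow> 'a) \<Rightarrow> ('a \<Rightarrow> 'a) \<Rightarrow> 'a tl set" where
  "Xt T1 T2 = {z. summable (\<lambda>n. (sum2_norm T1 T2 (snd z n))\<^sup>2)}"

definition tnorm :: "('a::real_normed_vector \<Rightarrow> 'a) \<Rightarrow> ('a \<Rightarrow> 'a) \<Rightarrow> 'a tl \<Rightarrow> real" where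
  "tnorm T1 T2 z = sqrt ((norm (fst z))\<^sup>2 + (\<Sum>n. (sum2_norm T1 T2 (snd z n))\<^sup>2))"

definition tadd :: "'a::real_vector tl \<Rightarrow> 'a tl \<Rightarrow> 'a tl" where
  "tadd z w = (fst z + fst w, \<lambda>n. snd z n + snd w n)"

definition tscale :: "real \<Rightarrow> 'a::real_vector tl \<Rightarrow> 'a tl" where
  "tscale c z = (c *\<^sub>R fst z, \<lambda>n. c *\<^sub>R snd z n)"

definition tzero :: "'a::real_vector tl" where
  "tzero = (0, \<lambda>n. (0, 0))"

definition tsub :: "'a::real_vector tl \<Rightarrow> 'a tl \<Rightarrow> 'a tl" where
  "tsub z w = tadd z (tscale (-1) w)"

definition temb :: "'a::real_vector \<Rightarrow> 'a tl" where
  "temb x = (x, \<lambda>n. (0, 0))"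

definition V1 :: "('a \<Rightarrow> 'a) \<Rightarrow> ('a \<times> 'a \<Rightarrow> 'a \<times> 'a) \<Rightarrow> 'a tl \<Rightarrow> 'a tl" where
  "V1 T1 S z = (T1 (fst z),
     \<lambda>n. case n of 0 \<Rightarrow> S (fst z, snd (snd z 0))
                 | Suc m \<Rightarrow> S (fst (snd z m), snd (snd z (Suc m))))"

definition V2 :: "('a \<Rightarrow> 'a) \<Rightarrow> ('a \<times> 'a \<Rightarrow> 'a \<times> 'a) \<Rightarrow> 'a tl \<Rightarrow> 'a tl" where
  "V2 T2 S z = (T2 (fst z),
     \<lambda>n. case n of 0 \<Rightarrow> (fst (inv S (snd z 0)), fst z)
                 | Suc m \<Rightarrow> (fst (inv S (snd z (Suc m))), snd (inv S (snd z m))))"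

end

theory Submission
  imports Defs
begin
definition Eb :: "nat \<Rightarrow> 'a::real_vector \<times> 'a \<Rightarrow> 'a tl" where
  "Eb n p = (0, \<lambda>m. if m = n then p else 0)"

definition trunc :: "nat \<Rightarrow> 'a::real_vector tl \<Rightarrow> 'a tl" where
  "trunc K z = (fst z, \<lambda>n. if n < K then snd z n else 0)"

inductive_set Span :: "('a::real_vector \<Rightarrow> 'a) \<Rightarrow> ('a \<Rightarrow> 'a) \<Rightarrow> ('a \<times> 'a \<Rightarrow> 'a \<times> 'a) \<Rightarrow> 'a tl set"
  for T1 T2 S where
  sp0: "tzero \<in> Span T1 T2 S"
| spS: "w \<in> Span T1 T2 S \<Longrightarrow>
     tadd (tscale c ((V1 T1 S ^^ a) ((V2 T2 S ^^ b) (temb x)))) w \<in> Span T1 T2 S"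

lemma tzero_alt: "tzero = (0, \<lambda>n. 0)"
  by (simp add: tzero_def zero_prod_def)

lemma tadd_assoc: "tadd (tadd a b) c = tadd a (tadd b c)"
  by (simp add: tadd_def algebra_simps)
lemma tadd_zero_left: "tadd tzero a = a"
  by (simp add: tadd_def tzero_alt)
lemma tscale_zero: "tscale c tzero = tzero"
  by (simp add: tscale_def tzero_alt)
lemma tscale_tadd: "tscale c (tadd a b) = tadd (tscale c a) (tscale c b)"
  by (simp add: tscale_def tadd_def algebra_simps)
lemma tscale_tscale: "tscale c (tscale d a) = tscale (c * d) a"
  by (simp add: tscale_def)
lemma tscale_one: "tscale 1 a = a"
  by (simp add: tscale_def)
lemma tsub_tadd: "tsub (tadd a b) a = b"
  by (simp add: tsub_def tscale_def tadd_def algebra_simps)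
lemma tadd_Eb: "tadd (Eb n p) (Eb n q) = Eb n (p + q)"
  by (auto simp: tadd_def Eb_def)

locale dil =
  fixes T1 T2 :: "'a::banach \<Rightarrow> 'a"
    and S :: "'a \<times> 'a \<Rightarrow> 'a \<times> 'a"
  assumes T1c: "strict_contraction T1"
    and T2c: "strict_contraction T2"
    and comm: "T1 \<circ> T2 = T2 \<circ> T1"
    and A1: "is_norm (A_T T1)"
    and A2: "is_norm (A_T T2)"
    and S_lin: "linear S"
    and S_iso: "\<And>p. sum2_norm T1 T2 (S p) = sum2_norm T1 T2 p"
    and S_surj: "surj S"
    and S_eq: "\<And>x. S (T2 x, x) = (x, T1 x)"
begin

abbreviation "s2 \<equiv> sum2_norm T1 T2"
abbreviation "v1 \<equiv> V1 T1 S"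
abbreviation "v2 \<equiv> V2 T2 S"
abbreviation "M \<equiv> Span T1 T2 S"

lemma T1_lin: "linear T1" using T1c bounded_linear.linear strict_contraction_def by blast
lemma T2_lin: "linear T2" using T2c bounded_linear.linear strict_contraction_def by blast

lemma T1_le: "norm (T1 x) \<le> norm x"
proof -
  have b: "bounded_linear T1" using T1c strict_contraction_def by blast
  have "norm (T1 x) \<le> onorm T1 * norm x" by (rule onorm[OF b])
  also have "\<dots> \<le> 1 * norm x" using T1c unfolding strict_contraction_def
    by (intro mult_right_mono) auto
  finally show ?thesis by simp
qed

lemma T2_le: "norm (T2 x) \<le> norm x"
proof -
  have b: "bounded_linear T2" using T2c strict_contraction_def by blast
  have "norm (T2 x) \<le> onorm T2 * norm x" by (rule onorm[OF b])
  also have "\<dots> \<le> 1 * norm x" using T2c unfolding strict_contraction_def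
    by (intro mult_right_mono) auto
  finally show ?thesis by simp
qed

lemma A1_sq: "(A_T T1 x)\<^sup>2 = (norm x)\<^sup>2 - (norm (T1 x))\<^sup>2"
proof -
  have "(norm (T1 x))\<^sup>2 \<le> (norm x)\<^sup>2" by (rule power_mono[OF T1_le]) simp
  then show ?thesis unfolding A_T_def by simp
qed

lemma A2_sq: "(A_T T2 x)\<^sup>2 = (norm x)\<^sup>2 - (norm (T2 x))\<^sup>2"
proof -
  have "(norm (T2 x))\<^sup>2 \<le> (norm x)\<^sup>2" by (rule power_mono[OF T2_le]) simp
  then show ?thesis unfolding A_T_def by simp
qed

lemma s2_sq: "(s2 p)\<^sup>2 = (A_T T1 (fst p))\<^sup>2 + (A_T T2 (snd p))\<^sup>2"
  unfolding sum2_norm_def by (simp add: add_nonneg_nonneg)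

lemma s2_zero: "s2 0 = 0"
  using A1 A2 unfolding sum2_norm_def is_norm_def by simp

lemma s2_eq0: assumes "s2 p = 0" shows "p = 0"
proof -
  have "(A_T T1 (fst p))\<^sup>2 + (A_T T2 (snd p))\<^sup>2 = 0" using assms s2_sq[of p] by simp
  then have "A_T T1 (fst p) = 0" "A_T T2 (snd p) = 0"
    by (simp_all add: sum_power2_eq_zero_iff)
  then show ?thesis using A1 A2 unfolding is_norm_def by (simp add: prod_eq_iff)
qed

lemma S0: "S 0 = 0" by (rule linear_0[OF S_lin])

lemma S_inj: "inj S"
proof (rule injI)
  fix p q assume "S p = S q"
  then have "S (p - q) = 0" by (simp add: linear_diff[OF S_lin])
  then have "s2 (p - q) = 0" using S_iso[of "p - q"] s2_zero by simp
  then show "p = q" using s2_eq0[of "p - q"] by simp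
qed

lemma Si1[simp]: "inv S (S p) = p" by (simp add: inv_f_f S_inj)
lemma Si2[simp]: "S (inv S p) = p" by (simp add: surj_f_inv_f S_surj)

lemma invS_add: "inv S (p + q) = inv S p + inv S q"
proof -
  have "S (inv S p + inv S q) = p + q" by (simp add: linear_add[OF S_lin])
  then show ?thesis by (metis Si1)
qed

lemma invS_scale: "inv S (c *\<^sub>R p) = c *\<^sub>R inv S p"
proof -
  have "S (c *\<^sub>R inv S p) = c *\<^sub>R p" by (simp add: linear_scale[OF S_lin])
  then show ?thesis by (metis Si1)
qed

lemma invS0: "inv S 0 = 0" by (metis S0 Si1)

lemma s2_inv: "s2 (inv S p) = s2 p" by (metis S_iso Si2)

lemma S_pair_add: "S (a + c, b + d) = S (a, b) + S (c, d)"
  by (metis add_Pair linear_add[OF S_lin])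
lemma S_pair_scale: "S (r *\<^sub>R a, r *\<^sub>R b) = r *\<^sub>R S (a, b)"
  by (metis scaleR_Pair linear_scale[OF S_lin])
lemma S00: "S (0, 0) = 0" using S0 by (simp add: zero_prod_def)
lemma invS00: "inv S (0, 0) = (0, 0)" using invS0 by (simp add: zero_prod_def)

end

context dil begin

lemma v1_fst[simp]: "fst (v1 z) = T1 (fst z)" by (simp add: V1_def)
lemma v2_fst[simp]: "fst (v2 z) = T2 (fst z)" by (simp add: V2_def)
lemma v1_snd0: "snd (v1 z) 0 = S (fst z, snd (snd z 0))" by (simp add: V1_def)
lemma v1_sndS: "snd (v1 z) (Suc m) = S (fst (snd z m), snd (snd z (Suc m)))" by (simp add: V1_def)
lemma v2_snd0: "snd (v2 z) 0 = (fst (inv S (snd z 0)), fst z)" by (simp add: V2_def)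
lemma v2_sndS: "snd (v2 z) (Suc m) = (fst (inv S (snd z (Suc m))), snd (inv S (snd z m)))"
  by (simp add: V2_def)

lemma tl_eqI: "fst a = fst b \<Longrightarrow> (\<And>n. snd a n = snd b n) \<Longrightarrow> a = b"
  by (simp add: prod_eq_iff ext)

lemma nat_allI: "P 0 \<Longrightarrow> (\<And>m. P (Suc m)) \<Longrightarrow> P n" by (cases n) auto

lemma v1_add: "v1 (tadd z w) = tadd (v1 z) (v1 w)"
  apply (rule tl_eqI)
   apply (simp add: tadd_def linear_add[OF T1_lin])
  subgoal for n by (rule nat_allI[of _ n]) (simp_all add: v1_snd0 v1_sndS tadd_def S_pair_add)
  done

lemma v1_scale: "v1 (tscale c z) = tscale c (v1 z)"
  apply (rule tl_eqI)
   apply (simp add: tscale_def linear_scale[OF T1_lin])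
  subgoal for n by (rule nat_allI[of _ n]) (simp_all add: v1_snd0 v1_sndS tscale_def S_pair_scale)
  done

lemma v2_add: "v2 (tadd z w) = tadd (v2 z) (v2 w)"
  apply (rule tl_eqI)
   apply (simp add: tadd_def linear_add[OF T2_lin])
  subgoal for n by (rule nat_allI[of _ n]) (simp_all add: v2_snd0 v2_sndS tadd_def invS_add)
  done

lemma v2_scale: "v2 (tscale c z) = tscale c (v2 z)"
  apply (rule tl_eqI)
   apply (simp add: tscale_def linear_scale[OF T2_lin])
  subgoal for n by (rule nat_allI[of _ n]) (simp_all add: v2_snd0 v2_sndS tscale_def invS_scale)
  done

lemma comm': "T1 (T2 x) = T2 (T1 x)" using comm by (metis comp_apply)

lemma v_comm: "v1 (v2 z) = v2 (v1 z)"
  apply (rule tl_eqI)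
   apply (simp add: comm')
  subgoal for n
    apply (rule nat_allI[of _ n])
     apply (simp add: v1_snd0 v1_sndS v2_snd0 v2_sndS S_eq)
    subgoal for m by (rule nat_allI[of _ m]) (simp_all add: v1_snd0 v1_sndS v2_snd0 v2_sndS)
    done
  done

lemma v1_zero: "v1 tzero = tzero"
  apply (rule tl_eqI)
   apply (simp add: tzero_alt linear_0[OF T1_lin])
  subgoal for n by (rule nat_allI[of _ n]) (simp_all add: v1_snd0 v1_sndS tzero_alt S00)
  done

lemma v2_zero: "v2 tzero = tzero"
  apply (rule tl_eqI)
   apply (simp add: tzero_alt linear_0[OF T2_lin])
  subgoal for n by (rule nat_allI[of _ n]) (simp_all add: v2_snd0 v2_sndS tzero_alt invS00 zero_prod_def)
  done

lemma fst_v1pow: "fst ((v1 ^^ n) z) = (T1 ^^ n) (fst z)" by (induction n) auto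
lemma fst_v2pow: "fst ((v2 ^^ n) z) = (T2 ^^ n) (fst z)" by (induction n) auto

lemma v2_v1pow: "v2 ((v1 ^^ a) z) = (v1 ^^ a) (v2 z)"
  by (induction a) (auto simp: v_comm[symmetric])

end

lemma shift_sum:
  fixes a b h :: "nat \<Rightarrow> real"
  assumes sa: "summable a" and sb: "summable b"
    and h0: "h 0 = c + b 0" and hS: "\<And>m. h (Suc m) = a m + b (Suc m)"
  shows "summable h \<and> suminf h = c + suminf a + suminf b"
proof -
  have sbS: "summable (\<lambda>m. b (Suc m))" using sb summable_Suc_iff by blast
  have hS': "(\<lambda>m. h (Suc m)) = (\<lambda>m. a m + b (Suc m))" using hS by auto
  have shS: "summable (\<lambda>m. h (Suc m))" unfolding hS' using summable_add[OF sa sbS] .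
  then have sh: "summable h" using summable_Suc_iff by blast
  have "(\<Sum>m. h (Suc m)) = suminf a + (\<Sum>m. b (Suc m))"
    unfolding hS' using suminf_add[OF sa sbS] by simp
  moreover have "(\<Sum>m. h (Suc m)) = suminf h - h 0" using suminf_split_head[OF sh] .
  moreover have "(\<Sum>m. b (Suc m)) = suminf b - b 0" using suminf_split_head[OF sb] .
  ultimately show ?thesis using sh h0 by simp
qed

lemma split_summable:
  fixes a b :: "nat \<Rightarrow> real"
  assumes "summable (\<lambda>n. a n + b n)" "\<And>n. 0 \<le> a n" "\<And>n. 0 \<le> b n"
  shows "summable a" "summable b"
   apply (rule summable_comparison_test'[OF assms(1)]) using assms(2,3) apply simp
  apply (rule summable_comparison_test'[OF assms(1)]) using assms(2,3) apply simp
  done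

context dil begin

lemma v1_iso:
  assumes z: "z \<in> Xt T1 T2"
  shows "v1 z \<in> Xt T1 T2 \<and> tnorm T1 T2 (v1 z) = tnorm T1 T2 z"
proof -
  define a where "a n = (A_T T1 (fst (snd z n)))\<^sup>2" for n
  define b where "b n = (A_T T2 (snd (snd z n)))\<^sup>2" for n
  define h where "h n = (s2 (snd (v1 z) n))\<^sup>2" for n
  have ab: "(\<lambda>n. (s2 (snd z n))\<^sup>2) = (\<lambda>n. a n + b n)" by (auto simp: a_def b_def s2_sq)
  have sab: "summable (\<lambda>n. a n + b n)" using z unfolding Xt_def ab[symmetric] by simp
  have sa: "summable a" by (rule split_summable(1)[OF sab]) (simp_all add: a_def b_def)
  have sb: "summable b" by (rule split_summable(2)[OF sab]) (simp_all add: a_def b_def)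
  have "summable h \<and> suminf h = (A_T T1 (fst z))\<^sup>2 + suminf a + suminf b"
    by (rule shift_sum[OF sa sb]) (simp_all add: h_def a_def b_def v1_snd0 v1_sndS S_iso s2_sq)
  moreover have "suminf (\<lambda>n. a n + b n) = suminf a + suminf b" using suminf_add[OF sa sb] by simp
  ultimately show ?thesis unfolding Xt_def tnorm_def
    using ab h_def A1_sq[of "fst z"] by (simp add: h_def[symmetric])
qed

lemma v2_iso:
  assumes z: "z \<in> Xt T1 T2"
  shows "v2 z \<in> Xt T1 T2 \<and> tnorm T1 T2 (v2 z) = tnorm T1 T2 z"
proof -
  define a where "a n = (A_T T1 (fst (inv S (snd z n))))\<^sup>2" for n
  define b where "b n = (A_T T2 (snd (inv S (snd z n))))\<^sup>2" for n
  define h where "h n = (s2 (snd (v2 z) n))\<^sup>2" for n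
  have ab: "(\<lambda>n. (s2 (snd z n))\<^sup>2) = (\<lambda>n. a n + b n)"
    by (auto simp: a_def b_def s2_sq[symmetric] s2_inv)
  have sab: "summable (\<lambda>n. a n + b n)" using z unfolding Xt_def ab[symmetric] by simp
  have sa: "summable a" by (rule split_summable(1)[OF sab]) (simp_all add: a_def b_def)
  have sb: "summable b" by (rule split_summable(2)[OF sab]) (simp_all add: a_def b_def)
  have "summable h \<and> suminf h = (A_T T2 (fst z))\<^sup>2 + suminf b + suminf a"
    by (rule shift_sum[OF sb sa]) (simp_all add: h_def a_def b_def v2_snd0 v2_sndS s2_sq)
  moreover have "suminf (\<lambda>n. a n + b n) = suminf a + suminf b" using suminf_add[OF sa sb] by simp
  ultimately show ?thesis unfolding Xt_def tnorm_def
    using ab h_def A2_sq[of "fst z"] by (simp add: h_def[symmetric])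
qed

end

context dil begin

lemma span_add: "w \<in> M \<Longrightarrow> u \<in> M \<Longrightarrow> tadd w u \<in> M"
  by (induction w rule: Span.induct) (auto simp: tadd_zero_left tadd_assoc intro: Span.intros)

lemma span_scale: "w \<in> M \<Longrightarrow> tscale d w \<in> M"
  by (induction w rule: Span.induct)
     (auto simp: tscale_zero tscale_tadd tscale_tscale intro: Span.intros)

lemma span_sub: "w \<in> M \<Longrightarrow> u \<in> M \<Longrightarrow> tsub w u \<in> M"
  unfolding tsub_def by (intro span_add span_scale)

lemma span_temb: "temb x \<in> M"
  using Span.spS[OF Span.sp0, where c=1 and a=0 and b=0 and x=x]
  by (simp add: tscale_one tadd_def tzero_alt temb_def zero_prod_def)

lemma span_v1: "w \<in> M \<Longrightarrow> v1 w \<in> M"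
proof (induction w rule: Span.induct)
  case sp0 then show ?case by (simp add: v1_zero Span.sp0)
next
  case (spS w c a b x)
  have "tadd (tscale c ((v1 ^^ Suc a) ((v2 ^^ b) (temb x)))) (v1 w) \<in> M"
    by (rule Span.spS[OF spS.IH])
  then show ?case by (simp add: v1_add v1_scale)
qed

lemma span_v2: "w \<in> M \<Longrightarrow> v2 w \<in> M"
proof (induction w rule: Span.induct)
  case sp0 then show ?case by (simp add: v2_zero Span.sp0)
next
  case (spS w c a b x)
  have "tadd (tscale c ((v1 ^^ a) ((v2 ^^ Suc b) (temb x)))) (v2 w) \<in> M"
    by (rule Span.spS[OF spS.IH])
  then show ?case by (simp add: v2_add v2_scale v2_v1pow)
qed

lemma v1_temb: "v1 (temb x) = tadd (temb (T1 x)) (Eb 0 (S (x, 0)))"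
  apply (rule tl_eqI)
   apply (simp add: temb_def tadd_def Eb_def)
  subgoal for n by (rule nat_allI[of _ n]) (simp_all add: v1_snd0 v1_sndS temb_def tadd_def Eb_def S00 zero_prod_def)
  done

lemma v2_temb: "v2 (temb y) = tadd (temb (T2 y)) (Eb 0 (0, y))"
  apply (rule tl_eqI)
   apply (simp add: temb_def tadd_def Eb_def)
  subgoal for n by (rule nat_allI[of _ n]) (simp_all add: v2_snd0 v2_sndS temb_def tadd_def Eb_def invS00)
  done

lemma v1_Eb0y: "v1 (Eb n (0, y)) = Eb n (S (0, y))"
  by (rule tl_eqI) (auto simp: V1_def V2_def Eb_def S00 invS00 invS0 zero_prod_def linear_0[OF T1_lin] linear_0[OF T2_lin] split: nat.split)

lemma v1_Ebx0: "v1 (Eb n (x, 0)) = Eb (Suc n) (S (x, 0))"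
  by (rule tl_eqI) (auto simp: V1_def V2_def Eb_def S00 invS00 invS0 zero_prod_def linear_0[OF T1_lin] linear_0[OF T2_lin] split: nat.split)

lemma v2_EbS: "v2 (Eb n (S (0, y))) = Eb (Suc n) (0, y)"
  by (rule tl_eqI) (auto simp: V1_def V2_def Eb_def S00 invS00 invS0 zero_prod_def linear_0[OF T1_lin] linear_0[OF T2_lin] split: nat.split)

lemma QtoP:
  assumes "\<forall>x y. Eb n (S (x, 0)) \<in> M \<and> Eb n (0, y) \<in> M"
  shows "Eb n p \<in> M"
proof -
  obtain x y where p: "p = S (x, y)" by (metis Si2 prod.collapse)
  have "Eb n (S (0, y)) \<in> M" using span_v1[of "Eb n (0, y)"] assms v1_Eb0y by simp
  then have "tadd (Eb n (S (x, 0))) (Eb n (S (0, y))) \<in> M" using assms span_add by blast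
  then show ?thesis using p by (simp add: tadd_Eb S_pair_add[symmetric])
qed

lemma Q_all: "\<forall>x y. Eb n (S (x, 0)) \<in> M \<and> Eb n (0, y) \<in> M"
proof (induction n)
  case 0
  show ?case
  proof (intro allI conjI)
    fix x y :: 'a
    show "Eb 0 (S (x, 0)) \<in> M"
      using span_sub[OF span_v1[OF span_temb] span_temb, of x "T1 x"] by (simp add: v1_temb tsub_tadd)
    show "Eb 0 (0, y) \<in> M"
      using span_sub[OF span_v2[OF span_temb] span_temb, of y "T2 y"] by (simp add: v2_temb tsub_tadd)
  qed
next
  case (Suc n)
  show ?case
  proof (intro allI conjI)
    fix x y :: 'a
    show "Eb (Suc n) (S (x, 0)) \<in> M"
      using span_v1[OF QtoP[OF Suc.IH, of "(x, 0)"]] by (simp add: v1_Ebx0)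
    show "Eb (Suc n) (0, y) \<in> M"
      using span_v2[OF QtoP[OF Suc.IH, of "S (0, y)"]] by (simp add: v2_EbS)
  qed
qed

lemma Eb_span: "Eb n p \<in> M" by (rule QtoP[OF Q_all])

lemma trunc_span: "trunc K z \<in> M"
proof (induction K)
  case 0
  have "trunc 0 z = temb (fst z)" by (simp add: trunc_def temb_def zero_prod_def)
  then show ?case using span_temb by simp
next
  case (Suc K)
  have "trunc (Suc K) z = tadd (trunc K z) (Eb K (snd z K))"
    by (rule tl_eqI) (auto simp: trunc_def tadd_def Eb_def)
  then show ?case using span_add[OF Suc.IH Eb_span] by simp
qed

lemma span_rep: "w \<in> M \<Longrightarrow> \<exists>k::nat. \<exists>c :: nat \<Rightarrow> real. \<exists>s1 s2 :: nat \<Rightarrow> nat. \<exists>x :: nat \<Rightarrow> 'a.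
   w = foldr tadd (map (\<lambda>i. tscale (c i) ((v1 ^^ s1 i) ((v2 ^^ s2 i) (temb (x i))))) [0..<k]) tzero"
proof (induction w rule: Span.induct)
  case sp0 then show ?case by (rule exI[of _ 0]) simp
next
  case (spS w c0 a b x0)
  then obtain k c s1 s2 x where w: "w = foldr tadd (map (\<lambda>i. tscale (c i) ((v1 ^^ s1 i) ((v2 ^^ s2 i) (temb (x i))))) [0..<k]) tzero"
    by blast
  show ?case
    apply (rule exI[of _ "Suc k"], rule exI[of _ "case_nat c0 c"], rule exI[of _ "case_nat a s1"],
           rule exI[of _ "case_nat b s2"], rule exI[of _ "case_nat x0 x"])
    apply (simp only: map_upt_Suc)
    apply (simp add: w)
    done
qed

lemma approx:
  assumes z: "z \<in> Xt T1 T2" and e: "e > 0"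
  shows "\<exists>K. tnorm T1 T2 (tsub z (trunc K z)) < e"
proof -
  define g where "g n = (s2 (snd z n))\<^sup>2" for n
  have sg: "summable g" using z unfolding Xt_def g_def by simp
  obtain K where K: "\<And>n. n \<ge> K \<Longrightarrow> norm (\<Sum>i. g (i + n)) < e\<^sup>2"
    using suminf_exist_split[OF _ sg, of "e\<^sup>2"] e by auto
  define f where "f n = (if n < K then 0 else g n)" for n
  have "\<forall>\<^sub>F n in sequentially. f n = g n"
    unfolding eventually_sequentially f_def by (rule exI[of _ K]) auto
  then have sf: "summable f" using sg summable_cong by blast
  have fs: "suminf f = (\<Sum>i. g (i + K))"
    using suminf_split_initial_segment[OF sf, of K] by (simp add: f_def)
  have tz: "tsub z (trunc K z) = (0, \<lambda>n. if n < K then 0 else snd z n)"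
    by (rule tl_eqI) (auto simp: tsub_def tadd_def tscale_def trunc_def)
  have "(\<lambda>n. (s2 (snd (tsub z (trunc K z)) n))\<^sup>2) = f"
    by (auto simp: tz f_def g_def s2_zero)
  then have "tnorm T1 T2 (tsub z (trunc K z)) = sqrt (suminf f)"
    unfolding tnorm_def by (simp add: tz)
  also have "\<dots> < sqrt (e\<^sup>2)"
  proof (rule real_sqrt_less_mono)
    have "0 \<le> (\<Sum>i. g (i + K))"
    proof (rule suminf_nonneg)
      show "summable (\<lambda>i. g (i + K))" using sg summable_iff_shift[of g K] by simp
    qed (simp add: g_def)
    then show "suminf f < e\<^sup>2" using K[of K] fs by simp
  qed
  also have "\<dots> = e" using e by simp
  finally show ?thesis by blast
qed

end

theorem mainTheorem5:
  fixes T1 T2 :: "'a::banach \<Rightarrow> 'a"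
    and S :: "'a \<times> 'a \<Rightarrow> 'a \<times> 'a"
  assumes T1c: "strict_contraction T1"
    and T2c: "strict_contraction T2"
    and comm: "T1 \<circ> T2 = T2 \<circ> T1"
    and A1: "is_norm (A_T T1)"
    and A2: "is_norm (A_T T2)"
    and S_lin: "linear S"
    and S_iso: "\<And>p. sum2_norm T1 T2 (S p) = sum2_norm T1 T2 p"
    and S_surj: "surj S"
    and S_eq: "\<And>x. S (T2 x, x) = (x, T1 x)"
  defines "X \<equiv> Xt T1 T2" and "N \<equiv> tnorm T1 T2"
  shows
    \<comment> \<open>V_1, V_2 map X~ into itself\<close>
    "(\<forall>z\<in>X. V1 T1 S z \<in> X \<and> V2 T2 S z \<in> X)
     \<comment> \<open>linearity\<close>
     \<and> (\<forall>z\<in>X. \<forall>w\<in>X. V1 T1 S (tadd z w) = tadd (V1 T1 S z) (V1 T1 S w)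
                     \<and> V2 T2 S (tadd z w) = tadd (V2 T2 S z) (V2 T2 S w))
     \<and> (\<forall>z\<in>X. \<forall>c. V1 T1 S (tscale c z) = tscale c (V1 T1 S z)
                   \<and> V2 T2 S (tscale c z) = tscale c (V2 T2 S z))
     \<comment> \<open>isometries\<close>
     \<and> (\<forall>z\<in>X. N (V1 T1 S z) = N z \<and> N (V2 T2 S z) = N z)
     \<comment> \<open>commuting\<close>
     \<and> (\<forall>z\<in>X. V1 T1 S (V2 T2 S z) = V2 T2 S (V1 T1 S z))
     \<comment> \<open>dilation property\<close>
     \<and> (\<forall>x s1 s2. fst ((V1 T1 S ^^ s1) ((V2 T2 S ^^ s2) (temb x))) = (T1 ^^ s1) ((T2 ^^ s2) x))
     \<comment> \<open>minimality: X~ is the closed linear span of {V_1^s1 V_2^s2 x}\<close>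
     \<and> (\<forall>z\<in>X. \<forall>e>0. \<exists>k::nat. \<exists>c :: nat \<Rightarrow> real. \<exists>s1 s2 :: nat \<Rightarrow> nat. \<exists>x :: nat \<Rightarrow> 'a.
           N (tsub z (foldr tadd (map (\<lambda>i. tscale (c i) ((V1 T1 S ^^ s1 i) ((V2 T2 S ^^ s2 i) (temb (x i))))) [0..<k]) tzero)) < e)"
proof -
  interpret dil T1 T2 S
    by (rule dil.intro) (fact assms)+
  have min: "\<exists>k::nat. \<exists>c :: nat \<Rightarrow> real. \<exists>s1 s2 :: nat \<Rightarrow> nat. \<exists>x :: nat \<Rightarrow> 'a.
           N (tsub z (foldr tadd (map (\<lambda>i. tscale (c i) ((V1 T1 S ^^ s1 i) ((V2 T2 S ^^ s2 i) (temb (x i))))) [0..<k]) tzero)) < e"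
    if z: "z \<in> X" and e: "e > 0" for z e
  proof -
    obtain K where K: "tnorm T1 T2 (tsub z (trunc K z)) < e"
      using approx[of z e] z e unfolding X_def by blast
    obtain k c s1 s2 x where r: "trunc K z = foldr tadd (map (\<lambda>i. tscale (c i) ((v1 ^^ s1 i) ((v2 ^^ s2 i) (temb (x i))))) [0..<k]) tzero"
      using span_rep[OF trunc_span[of K z]] by blast
    show ?thesis using K unfolding N_def r by blast
  qed
  show ?thesis
    using v1_iso v2_iso v1_add v2_add v1_scale v2_scale v_comm min
    by (simp add: X_def N_def fst_v1pow fst_v2pow temb_def)
qed

end
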